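(* Let $\mathbb K=\prod_s\mathbb F_s^{alg}/\mathcal D$. Then $\mathbb K\cap\mathbb F^{alg}=\mathfrak K^{alg}$, where $\mathfrak K^{alg}$ is the set of elements of $\mathbb K$ algebraic over $\mathfrak K$ (an algebraic closure of $\mathfrak K$).
   Context: Let $S$ be an infinite set, $\mathcal D$ a nonprincipal ultrafilter on $S$; ultraproducts $\prod_sA_s/\mathcal D$ consist of tuples modulo agreement on a set in $\mathcal D$, classes written $\mathrm{ulim}_sa_s$, componentwise operations. For each $s$ let $\mathbb F_s$ be a field, $\mathfrak F_s=\mathbb F_s(t)$, fix an algebraic closure $\mathfrak F_s^{alg}$ and let $\mathbb F_s^{alg}\subseteq\mathfrak F_s^{alg}$ be the algebraic closure of $\mathbb F_s$ in it. Let $\mathfrak K=\prod_s\mathbb F_s/\mathcal D$, $\mathbb F=\mathfrak K(t)\subseteq\prod_s\mathfrak F_s/\mathcal D$ (via $\sum_i(\mathrm{ulim}_sa_{i,s})t^i\mapsto\mathrm{ulim}_s\sum_ia_{i,s}t^i$), and $\mathbb F^{alg}$ the set of elements of $\prod_s\mathfrak F_s^{alg}/\mathcal D$ algebraic over $\mathbb F$; note $\mathbb K\subseteq\prod_s\mathfrak F_s^{alg}/\mathcal D$. *)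

theory Defs
  imports "HOL-Algebra.Algebra" "HOL-Algebra.Generated_Fields" "HOL-Library.FuncSet"
begin

definition ultrafilter_on :: "'s set \<Rightarrow> 's set set \<Rightarrow> bool" where
  "ultrafilter_on S D \<longleftrightarrow>
     D \<subseteq> Pow S \<and> S \<in> D \<and> {} \<notin> D \<and>
     (\<forall>A B. A \<in> D \<longrightarrow> B \<in> D \<longrightarrow> A \<inter> B \<in> D) \<and>
     (\<forall>A B. A \<in> D \<longrightarrow> A \<subseteq> B \<longrightarrow> B \<subseteq> S \<longrightarrow> B \<in> D) \<and>
     (\<forall>A. A \<subseteq> S \<longrightarrow> A \<in> D \<or> S - A \<in> D)"

definition nonprincipal_on :: "'s set \<Rightarrow> 's set set \<Rightarrow> bool" where
  "nonprincipal_on S D \<longleftrightarrow> (\<forall>s\<in>S. {s} \<notin> D)"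

definition uprod :: "'s set \<Rightarrow> ('s \<Rightarrow> ('a, 'b) ring_scheme) \<Rightarrow> ('s \<Rightarrow> 'a) set" where
  "uprod S L = (\<Pi>\<^sub>E s\<in>S. carrier (L s))"

definition ueq :: "'s set set \<Rightarrow> 's set \<Rightarrow> ('s \<Rightarrow> 'a) \<Rightarrow> ('s \<Rightarrow> 'a) \<Rightarrow> bool" where
  "ueq D S f g \<longleftrightarrow> {s \<in> S. f s = g s} \<in> D"

definition ulim :: "'s set set \<Rightarrow> 's set \<Rightarrow> ('s \<Rightarrow> ('a, 'b) ring_scheme) \<Rightarrow> ('s \<Rightarrow> 'a) \<Rightarrow> ('s \<Rightarrow> 'a) set" where
  "ulim D S L f = {g \<in> uprod S L. ueq D S f g}"

definition urep :: "('s \<Rightarrow> 'a) set \<Rightarrow> ('s \<Rightarrow> 'a)" where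
  "urep P = (SOME f. f \<in> P)"

definition umult :: "'s set set \<Rightarrow> 's set \<Rightarrow> ('s \<Rightarrow> ('a, 'b) ring_scheme) \<Rightarrow> ('s \<Rightarrow> 'a) set \<Rightarrow> ('s \<Rightarrow> 'a) set \<Rightarrow> ('s \<Rightarrow> 'a) set" where
  "umult D S L P Q = ulim D S L (restrict (\<lambda>s. monoid.mult (L s) (urep P s) (urep Q s)) S)"

definition uadd :: "'s set set \<Rightarrow> 's set \<Rightarrow> ('s \<Rightarrow> ('a, 'b) ring_scheme) \<Rightarrow> ('s \<Rightarrow> 'a) set \<Rightarrow> ('s \<Rightarrow> 'a) set \<Rightarrow> ('s \<Rightarrow> 'a) set" where
  "uadd D S L P Q = ulim D S L (restrict (\<lambda>s. ring.add (L s) (urep P s) (urep Q s)) S)"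

definition uone :: "'s set set \<Rightarrow> 's set \<Rightarrow> ('s \<Rightarrow> ('a, 'b) ring_scheme) \<Rightarrow> ('s \<Rightarrow> 'a) set" where
  "uone D S L = ulim D S L (restrict (\<lambda>s. monoid.one (L s)) S)"

definition uzero :: "'s set set \<Rightarrow> 's set \<Rightarrow> ('s \<Rightarrow> ('a, 'b) ring_scheme) \<Rightarrow> ('s \<Rightarrow> 'a) set" where
  "uzero D S L = ulim D S L (restrict (\<lambda>s. ring.zero (L s)) S)"

definition ultraproduct :: "'s set set \<Rightarrow> 's set \<Rightarrow> ('s \<Rightarrow> ('a, 'b) ring_scheme) \<Rightarrow> ('s \<Rightarrow> 'a) set ring" where
  "ultraproduct D S L =
     \<lparr> carrier = ulim D S L ` uprod S L, monoid.mult = umult D S L, one = uone D S L,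
       ring.zero = uzero D S L, ring.add = uadd D S L \<rparr>"

text \<open>The image in the ultraproduct of prod_s A_s / D for subsets A_s of carrier (L s).\<close>
definition usub :: "'s set set \<Rightarrow> 's set \<Rightarrow> ('s \<Rightarrow> ('a, 'b) ring_scheme) \<Rightarrow> ('s \<Rightarrow> 'a set) \<Rightarrow> ('s \<Rightarrow> 'a) set set" where
  "usub D S L A = ulim D S L ` (\<Pi>\<^sub>E s\<in>S. A s)"

definition alg_in :: "('a, 'b) ring_scheme \<Rightarrow> 'a set \<Rightarrow> 'a set" where
  "alg_in L K = {x \<in> carrier L. ring.algebraic L K x}"

end

theory Submission
  imports Defs
begin


context field
begin

lemma eval_scale:
  assumes "set p \<subseteq> carrier R" "b \<in> carrier R" "x \<in> carrier R"
  shows "eval (map (\<lambda>c. b \<otimes> c) p) x = b \<otimes> eval p x"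
  using assms(1)
proof (induct p)
  case Nil then show ?case using assms by simp
next
  case (Cons a p)
  have ep: "eval p x \<in> carrier R" using Cons eval_in_carrier assms by auto
  have "eval (map (\<lambda>c. b \<otimes> c) (a # p)) x = (b \<otimes> a) \<otimes> x [^] length p \<oplus> eval (map (\<lambda>c. b \<otimes> c) p) x"
    by simp
  also have "\<dots> = b \<otimes> (a \<otimes> x [^] length p \<oplus> eval p x)"
    using Cons assms ep by (simp add: r_distr m_assoc)
  finally show ?case by simp
qed

lemma transcendental_over_algebraic_ext:
  assumes F: "subfield F R" and x: "x \<in> carrier R" "algebraic F x"
    and t: "t \<in> carrier R" "transcendental F t"
  shows "transcendental (simple_extension F x) t"
proof (rule ccontr)
  assume "\<not> transcendental (simple_extension F x) t"
  hence alg: "algebraic (simple_extension F x) t" by simp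
  have B: "subfield (simple_extension F x) R"
    using simple_extension_is_subfield[OF F x(1)] x(2) by (simp add: over_def)
  have d1: "finite_dimension F (simple_extension F x)"
    using finite_dimensionI[OF dimension_simple_extension[OF F x(1)]] x(2) by (simp add: over_def)
  have d2: "finite_dimension (simple_extension F x) (simple_extension (simple_extension F x) t)"
    using finite_dimensionI[OF dimension_simple_extension[OF B t(1)]] alg by (simp add: over_def)
  have d3: "finite_dimension F (simple_extension (simple_extension F x) t)"
    using telescopic_base_dim(1)[OF F B d1 d2] .
  have sr: "subring (simple_extension (simple_extension F x) t) R"
    using simple_extension_is_subring[OF subfieldE(1)[OF B] t(1)] .
  have "t \<in> simple_extension (simple_extension F x) t"
    using simple_extension_mem[OF subfieldE(1)[OF B] t(1)] .
  hence "algebraic F t" using finite_dimension_imp_algebraic[OF F sr d3] by (simp add: over_def)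
  with t(2) show False by simp
qed

definition fracs :: "'a set \<Rightarrow> 'a set" where
  "fracs E = {y \<in> carrier R. \<exists>b\<in>E. b \<noteq> \<zero> \<and> y \<otimes> b \<in> E}"

lemma fracs_subfield:
  assumes E: "subring E R"
  shows "subfield (fracs E) R"
proof (rule subfieldI'[OF subringI])
  have Ec: "E \<subseteq> carrier R" using subringE(1)[OF E] .
  show "fracs E \<subseteq> carrier R" unfolding fracs_def by auto
  show "\<one> \<in> fracs E" unfolding fracs_def using subringE(3)[OF E] one_not_zero by force
  fix h assume "h \<in> fracs E"
  then obtain b where h: "h \<in> carrier R" "b \<in> E" "b \<noteq> \<zero>" "h \<otimes> b \<in> E" unfolding fracs_def by auto
  have "\<ominus> h \<otimes> b = \<ominus> (h \<otimes> b)" using h Ec by (simp add: l_minus subsetD)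
  thus "\<ominus> h \<in> fracs E" unfolding fracs_def using h subringE(5)[OF E] by auto
next
  fix h1 h2 assume "h1 \<in> fracs E" "h2 \<in> fracs E"
  then obtain b1 b2 where h: "h1 \<in> carrier R" "b1 \<in> E" "b1 \<noteq> \<zero>" "h1 \<otimes> b1 \<in> E"
      "h2 \<in> carrier R" "b2 \<in> E" "b2 \<noteq> \<zero>" "h2 \<otimes> b2 \<in> E" unfolding fracs_def by auto
  have c: "b1 \<in> carrier R" "b2 \<in> carrier R" using h subringE(1)[OF E] by auto
  have nz: "b1 \<otimes> b2 \<noteq> \<zero>" using h c integral by blast
  have bE: "b1 \<otimes> b2 \<in> E" using h subringE(6)[OF E] by auto
  have "(h1 \<otimes> h2) \<otimes> (b1 \<otimes> b2) = (h1 \<otimes> b1) \<otimes> (h2 \<otimes> b2)" using h c by (simp add: m_ac)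
  hence "(h1 \<otimes> h2) \<otimes> (b1 \<otimes> b2) \<in> E" using h subringE(6)[OF E] by auto
  thus "h1 \<otimes> h2 \<in> fracs E" unfolding fracs_def using h nz bE by auto
  have "(h1 \<oplus> h2) \<otimes> (b1 \<otimes> b2) = (h1 \<otimes> b1) \<otimes> b2 \<oplus> (h2 \<otimes> b2) \<otimes> b1" using h c
    by (simp add: m_ac l_distr r_distr)
  hence "(h1 \<oplus> h2) \<otimes> (b1 \<otimes> b2) \<in> E" using h subringE(6,7)[OF E] by auto
  thus "h1 \<oplus> h2 \<in> fracs E" unfolding fracs_def using h nz bE by auto
next
  fix k assume "k \<in> fracs E - {\<zero>}"
  then obtain b where h: "k \<in> carrier R" "k \<noteq> \<zero>" "b \<in> E" "b \<noteq> \<zero>" "k \<otimes> b \<in> E" unfolding fracs_def by auto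
  have c: "b \<in> carrier R" using h subringE(1)[OF E] by auto
  have nz: "k \<otimes> b \<noteq> \<zero>" using h c integral by blast
  have ik: "inv k \<in> carrier R" using h field_Units by auto
  have "inv k \<otimes> (k \<otimes> b) = b" using h c ik field_Units by (simp add: m_assoc[symmetric])
  thus "inv k \<in> fracs E" unfolding fracs_def using h nz ik by auto
qed

lemma common_denom:
  assumes E: "subring E R" and "set q \<subseteq> fracs E"
  shows "\<exists>b\<in>E. b \<noteq> \<zero> \<and> (\<forall>c\<in>set q. b \<otimes> c \<in> E)"
  using assms(2)
proof (induct q)
  case Nil then show ?case using subringE(3)[OF E] one_not_zero by force
next
  case (Cons a q)
  then obtain b where b: "b \<in> E" "b \<noteq> \<zero>" "\<forall>c\<in>set q. b \<otimes> c \<in> E" by auto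
  obtain d where d: "a \<in> carrier R" "d \<in> E" "d \<noteq> \<zero>" "a \<otimes> d \<in> E" using Cons(2) unfolding fracs_def by auto
  have Ec: "E \<subseteq> carrier R" using subringE(1)[OF E] .
  have c: "b \<in> carrier R" "d \<in> carrier R" using b d Ec by auto
  have "d \<otimes> b \<noteq> \<zero>" using b d c integral by blast
  moreover have "d \<otimes> b \<in> E" using b d subringE(6)[OF E] by auto
  moreover have "(d \<otimes> b) \<otimes> a \<in> E"
  proof -
    have "(d \<otimes> b) \<otimes> a = (a \<otimes> d) \<otimes> b" using c d by (simp add: m_ac)
    thus ?thesis using b d subringE(6)[OF E] by auto
  qed
  moreover have "(d \<otimes> b) \<otimes> c \<in> E" if "c \<in> set q" for c
  proof -
    have cc: "c \<in> carrier R" using that Cons(2) unfolding fracs_def by auto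
    have "(d \<otimes> b) \<otimes> c = d \<otimes> (b \<otimes> c)" using c cc by (simp add: m_assoc)
    thus ?thesis using b d that subringE(6)[OF E] by auto
  qed
  ultimately show ?case by auto
qed

lemma coeff_in_K:
  assumes "set p \<subseteq> K" "\<zero> \<in> K" shows "coeff p j \<in> K"
proof -
  have "coeff p j \<in> coeff p ` UNIV" by simp
  thus ?thesis using coeff_img(3)[of p] assms by auto
qed

lemma comp_main:
  assumes F: "subfield F R" and t: "t \<in> carrier R" "transcendental F t"
    and x: "x \<in> carrier R" "algebraic F x"
    and q: "set q \<subseteq> generate_field R (insert t F)" "q \<noteq> []" "hd q \<noteq> \<zero>" "eval q x = \<zero>"
  shows "\<exists>r. set r \<subseteq> F \<and> r \<noteq> [] \<and> hd r \<noteq> \<zero> \<and> length r = length q \<and> eval r x = \<zero>"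
proof -
  define E where "E = simple_extension F t"
  have Fc: "F \<subseteq> carrier R" using subfieldE(3)[OF F] .
  have F0: "\<zero> \<in> F" using subringE(2)[OF subfieldE(1)[OF F]] .
  have Esr: "subring E R" unfolding E_def using simple_extension_is_subring[OF subfieldE(1)[OF F] t(1)] .
  have Ec: "E \<subseteq> carrier R" using subringE(1)[OF Esr] .
  have tE: "t \<in> E" unfolding E_def using simple_extension_mem[OF subfieldE(1)[OF F] t(1)] .
  have FE: "F \<subseteq> E" unfolding E_def using simple_extension_incl[OF Fc t(1)] .
  have Efr: "E \<subseteq> fracs E"
  proof
    fix e assume "e \<in> E" thus "e \<in> fracs E" unfolding fracs_def using Ec subringE(3)[OF Esr] one_not_zero
      by (intro CollectI conjI bexI[of _ \<one>]) auto
  qed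
  have Mfr: "generate_field R (insert t F) \<subseteq> fracs E"
    using generate_field_min_subfield1[of "insert t F" "fracs E"] fracs_subfield[OF Esr] Fc t(1) tE FE Efr
    by auto
  obtain b where b: "b \<in> E" "b \<noteq> \<zero>" "\<forall>c\<in>set q. b \<otimes> c \<in> E"
    using common_denom[OF Esr] q(1) Mfr by blast
  have bc: "b \<in> carrier R" using b Ec by auto
  have qc: "set q \<subseteq> carrier R" using q(1) Mfr unfolding fracs_def by auto
  define q' where "q' = map (\<lambda>c. b \<otimes> c) q"
  have q'E: "set q' \<subseteq> E" unfolding q'_def using b by auto
  have q'0: "eval q' x = \<zero>" unfolding q'_def using eval_scale[OF qc bc x(1)] q(4) bc by simp
  have q'ne: "q' \<noteq> []" "length q' = length q" unfolding q'_def using q(2) by auto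
  have q'hd: "hd q' \<noteq> \<zero>" unfolding q'_def using q(2,3) bc qc integral b(2)
    by (cases q) auto
  define B where "B = simple_extension F x"
  have Bsf: "subfield B R"
    unfolding B_def using simple_extension_is_subfield[OF F x(1)] x(2) by (simp add: over_def)
  have Bsr: "subring B R" using subfieldE(1)[OF Bsf] .
  have Bc: "B \<subseteq> carrier R" using subringE(1)[OF Bsr] .
  have FB: "F \<subseteq> B" unfolding B_def using simple_extension_incl[OF Fc x(1)] .
  have xB: "x \<in> B" unfolding B_def using simple_extension_mem[OF subfieldE(1)[OF F] x(1)] .
  have Bt: "transcendental B t" unfolding B_def using transcendental_over_algebraic_ext[OF F x t] .
  define P where "P e = (SOME P. P \<in> carrier (F[X]) \<and> eval P t = e)" for e
  have P: "P e \<in> carrier (F[X]) \<and> eval (P e) t = e" if "e \<in> E" for e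
  proof -
    have "\<exists>P. P \<in> carrier (F[X]) \<and> eval P t = e"
      using that simple_extension_as_eval_img[OF Fc t(1)] unfolding E_def by auto
    thus ?thesis unfolding P_def by (rule someI_ex)
  qed
  have PF: "set (P e) \<subseteq> F" if "e \<in> E" for e
    using P[OF that] unfolding univ_poly_carrier[symmetric] polynomial_def by auto
  have PcF: "coeff (P e) j \<in> F" if "e \<in> E" for e j
    using coeff_in_K[OF PF[OF that] F0] .
  have xpow: "x [^] (n::nat) \<in> B" for n
    by (induct n) (auto simp add: subringE(3,6)[OF Bsr] xB)
  have claim: "\<exists>H. polynomial B H \<and> eval H t = eval l x \<and> (\<forall>j. coeff H j = eval (map (\<lambda>e. coeff (P e) j) l) x)"
    if "set l \<subseteq> E" for l
    using that
  proof (induct l)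
    case Nil then show ?case by (intro exI[of _ "[]"]) auto
  next
    case (Cons e l)
    then obtain H where H: "polynomial B H" "eval H t = eval l x"
       "\<forall>j. coeff H j = eval (map (\<lambda>e. coeff (P e) j) l) x" by auto
    have eE: "e \<in> E" and lE: "set l \<subseteq> E" using Cons by auto
    define c where "c = x [^] length l"
    have cB: "c \<in> B" unfolding c_def using xpow .
    have cc: "c \<in> carrier R" using cB Bc by auto
    have ec: "e \<in> carrier R" using eE Ec by auto
    have lc: "set l \<subseteq> carrier R" using lE Ec by auto
    have Pc: "set (P e) \<subseteq> carrier R" using PF[OF eE] Fc by auto
    have HB: "set H \<subseteq> B" using H(1) polynomial_incl by auto
    have Hc: "set H \<subseteq> carrier R" using HB Bc by auto
    define G where "G = map (\<lambda>a. c \<otimes> a) (P e)"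
    have GB: "set G \<subseteq> B" unfolding G_def using PF[OF eE] FB cB subringE(6)[OF Bsr] by auto
    have Gc: "set G \<subseteq> carrier R" using GB Bc by auto
    define H' where "H' = poly_add (normalize G) H"
    have nGB: "polynomial B (normalize G)" using normalize_gives_polynomial[OF GB] .
    have "polynomial B H'" unfolding H'_def using poly_add_closed[OF Bsr nGB H(1)] .
    moreover have "eval H' t = eval (e # l) x"
    proof -
      have "eval H' t = eval (normalize G) t \<oplus> eval H t"
        unfolding H'_def using eval_poly_add[OF normalize_in_carrier[OF Gc] Hc t(1)] .
      also have "\<dots> = c \<otimes> e \<oplus> eval l x"
        using eval_normalize[OF Gc t(1)] eval_scale[OF Pc cc t(1)] P[OF eE] H(2) unfolding G_def by simp
      also have "\<dots> = eval (e # l) x" unfolding c_def using ec x(1) by (simp add: m_comm)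
      finally show ?thesis .
    qed
    moreover have "coeff H' j = eval (map (\<lambda>e. coeff (P e) j) (e # l)) x" for j
    proof -
      have "coeff H' j = coeff (normalize G) j \<oplus> coeff H j"
        unfolding H'_def using poly_add_coeff[OF normalize_in_carrier[OF Gc] Hc] by simp
      also have "\<dots> = c \<otimes> coeff (P e) j \<oplus> eval (map (\<lambda>e. coeff (P e) j) l) x"
        using normalize_coeff[of G] scalar_coeff[OF cc, of "P e"] H(3) unfolding G_def by (metis (no_types))
      also have "\<dots> = eval (map (\<lambda>e. coeff (P e) j) (e # l)) x"
        unfolding c_def using coeff_in_carrier[OF Pc] x(1) by (simp add: m_comm)
      finally show ?thesis .
    qed
    ultimately show ?case by blast
  qed
  obtain H where H: "polynomial B H" "eval H t = eval q' x"
       "\<forall>j. coeff H j = eval (map (\<lambda>e. coeff (P e) j) q') x" using claim[OF q'E] by blast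
  have "H = []"
    using eval_transcendental[of B t H] Bt H(1,2) q'0 univ_poly_carrier[of R B H] by (simp add: over_def)
  hence ev0: "eval (map (\<lambda>e. coeff (P e) j) q') x = \<zero>" for j using H(3) by simp
  define e0 where "e0 = hd q'"
  have e0E: "e0 \<in> E" unfolding e0_def using q'E q'ne by auto
  have "P e0 \<noteq> []" using P[OF e0E] q'hd unfolding e0_def by auto
  hence lc0: "coeff (P e0) (degree (P e0)) \<noteq> \<zero>"
    using P[OF e0E] lead_coeff_simp[of "P e0"] unfolding univ_poly_carrier[symmetric] polynomial_def by auto
  define r where "r = map (\<lambda>e. coeff (P e) (degree (P e0))) q'"
  have "set r \<subseteq> F" unfolding r_def using PcF q'E by auto
  moreover have "r \<noteq> []" "length r = length q" unfolding r_def using q'ne by auto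
  moreover have "hd r \<noteq> \<zero>" unfolding r_def using lc0 q'ne unfolding e0_def by (cases q') auto
  moreover have "eval r x = \<zero>" unfolding r_def using ev0 .
  ultimately show ?thesis by blast
qed

end


locale UltP =
  fixes S :: "'s set" and D :: "'s set set" and L :: "'s \<Rightarrow> 'a ring"
  assumes uf: "ultrafilter_on S D"
    and fld: "\<And>s. s \<in> S \<Longrightarrow> field (L s)"
begin

abbreviation "U \<equiv> ultraproduct D S L"
abbreviation "cls \<equiv> ulim D S L"

lemma D_sub: "A \<in> D \<Longrightarrow> A \<subseteq> S" using uf unfolding ultrafilter_on_def by auto
lemma S_D: "S \<in> D" using uf unfolding ultrafilter_on_def by auto
lemma empty_D: "{} \<notin> D" using uf unfolding ultrafilter_on_def by auto
lemma D_int: "A \<in> D \<Longrightarrow> B \<in> D \<Longrightarrow> A \<inter> B \<in> D" using uf unfolding ultrafilter_on_def by auto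
lemma D_up: "A \<in> D \<Longrightarrow> A \<subseteq> B \<Longrightarrow> B \<subseteq> S \<Longrightarrow> B \<in> D" using uf unfolding ultrafilter_on_def by auto
lemma D_compl: "A \<subseteq> S \<Longrightarrow> A \<in> D \<or> S - A \<in> D" using uf unfolding ultrafilter_on_def by auto

lemma D_mono: "{s\<in>S. P s} \<in> D \<Longrightarrow> (\<And>s. s \<in> S \<Longrightarrow> P s \<Longrightarrow> Q s) \<Longrightarrow> {s\<in>S. Q s} \<in> D"
  by (erule D_up) auto

lemma D_conj: "{s\<in>S. P s} \<in> D \<Longrightarrow> {s\<in>S. Q s} \<in> D \<Longrightarrow> {s\<in>S. P s \<and> Q s} \<in> D"
proof -
  assume "{s\<in>S. P s} \<in> D" "{s\<in>S. Q s} \<in> D"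
  hence "{s\<in>S. P s} \<inter> {s\<in>S. Q s} \<in> D" by (rule D_int)
  moreover have "{s\<in>S. P s} \<inter> {s\<in>S. Q s} = {s\<in>S. P s \<and> Q s}" by auto
  ultimately show ?thesis by simp
qed

lemma D_disj: "{s\<in>S. P s \<or> Q s} \<in> D \<Longrightarrow> {s\<in>S. P s} \<in> D \<or> {s\<in>S. Q s} \<in> D"
proof (rule ccontr)
  assume a: "{s\<in>S. P s \<or> Q s} \<in> D" "\<not> ({s\<in>S. P s} \<in> D \<or> {s\<in>S. Q s} \<in> D)"
  hence "S - {s\<in>S. P s} \<in> D" "S - {s\<in>S. Q s} \<in> D" using D_compl[of "{s\<in>S. P s}"] D_compl[of "{s\<in>S. Q s}"] by auto
  hence "{s\<in>S. P s \<or> Q s} \<inter> ((S - {s\<in>S. P s}) \<inter> (S - {s\<in>S. Q s})) \<in> D" using a(1) D_int by blast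
  moreover have "{s\<in>S. P s \<or> Q s} \<inter> ((S - {s\<in>S. P s}) \<inter> (S - {s\<in>S. Q s})) = {}" by auto
  ultimately show False using empty_D by simp
qed

lemma D_not_false: "{s\<in>S. P s} \<in> D \<Longrightarrow> {s\<in>S. \<not> P s} \<in> D \<Longrightarrow> False"
  using D_conj[of P "\<lambda>s. \<not> P s"] empty_D by simp

lemma cls_self: "f \<in> uprod S L \<Longrightarrow> f \<in> cls f"
  unfolding ulim_def ueq_def using S_D by simp

lemma cls_eq: assumes "f \<in> uprod S L" "g \<in> uprod S L"
  shows "cls f = cls g \<longleftrightarrow> {s\<in>S. f s = g s} \<in> D"
proof
  assume "cls f = cls g"
  hence "f \<in> cls g" using cls_self[OF assms(1)] by simp
  thus "{s\<in>S. f s = g s} \<in> D" unfolding ulim_def ueq_def by (auto elim: D_mono)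
next
  assume fg: "{s\<in>S. f s = g s} \<in> D"
  show "cls f = cls g" unfolding ulim_def ueq_def
  proof (intro Collect_cong conj_cong refl iffI)
    fix h assume "{s \<in> S. f s = h s} \<in> D"
    with fg show "{s \<in> S. g s = h s} \<in> D" by (rule D_conj[THEN D_mono]) auto
  next
    fix h assume "{s \<in> S. g s = h s} \<in> D"
    with fg show "{s \<in> S. f s = h s} \<in> D" by (rule D_conj[THEN D_mono]) auto
  qed
qed

lemma urep_in: assumes "f \<in> uprod S L" shows "urep (cls f) \<in> uprod S L" "{s\<in>S. f s = urep (cls f) s} \<in> D"
proof -
  have "urep (cls f) \<in> cls f" unfolding urep_def using cls_self[OF assms] by (metis someI)
  thus "urep (cls f) \<in> uprod S L" "{s\<in>S. f s = urep (cls f) s} \<in> D" unfolding ulim_def ueq_def by auto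
qed

lemma carrier_U: "carrier U = cls ` uprod S L" unfolding ultraproduct_def by simp

lemma restrict_uprod: "(\<And>s. s \<in> S \<Longrightarrow> h s \<in> carrier (L s)) \<Longrightarrow> (\<lambda>s\<in>S. h s) \<in> uprod S L"
  unfolding uprod_def by auto

lemma uprodD: "f \<in> uprod S L \<Longrightarrow> s \<in> S \<Longrightarrow> f s \<in> carrier (L s)"
  unfolding uprod_def by auto

lemma add_cls: assumes "f \<in> uprod S L" "g \<in> uprod S L"
  shows "cls f \<oplus>\<^bsub>U\<^esub> cls g = cls (\<lambda>s\<in>S. f s \<oplus>\<^bsub>L s\<^esub> g s)"
proof -
  have c: "(\<lambda>s\<in>S. f s \<oplus>\<^bsub>L s\<^esub> g s) \<in> uprod S L"
    using assms by (intro restrict_uprod) (auto dest: uprodD intro: ring.ring_simprules[OF field.axioms(1)[OF fld, THEN domain.axioms(1), THEN cring.axioms(1)]])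
  have c2: "(\<lambda>s\<in>S. urep (cls f) s \<oplus>\<^bsub>L s\<^esub> urep (cls g) s) \<in> uprod S L"
    using urep_in(1)[OF assms(1)] urep_in(1)[OF assms(2)]
    by (intro restrict_uprod) (auto dest: uprodD intro: ring.ring_simprules[OF field.axioms(1)[OF fld, THEN domain.axioms(1), THEN cring.axioms(1)]])
  show ?thesis
    unfolding ultraproduct_def uadd_def apply simp
    apply (subst cls_eq[OF c2 c])
    using D_conj[OF urep_in(2)[OF assms(1)] urep_in(2)[OF assms(2)]] by (rule D_mono) auto
qed

lemma cr: "s \<in> S \<Longrightarrow> cring (L s)" using fld[of s] unfolding field_def domain_def by auto

lemma mult_cls: assumes "f \<in> uprod S L" "g \<in> uprod S L"
  shows "cls f \<otimes>\<^bsub>U\<^esub> cls g = cls (\<lambda>s\<in>S. f s \<otimes>\<^bsub>L s\<^esub> g s)"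
proof -
  have c: "(\<lambda>s\<in>S. f s \<otimes>\<^bsub>L s\<^esub> g s) \<in> uprod S L"
    using assms by (intro restrict_uprod) (auto dest: uprodD intro: cring.cring_simprules[OF cr])
  have c2: "(\<lambda>s\<in>S. urep (cls f) s \<otimes>\<^bsub>L s\<^esub> urep (cls g) s) \<in> uprod S L"
    using urep_in(1)[OF assms(1)] urep_in(1)[OF assms(2)]
    by (intro restrict_uprod) (auto dest: uprodD intro: cring.cring_simprules[OF cr])
  show ?thesis
    unfolding ultraproduct_def umult_def apply simp
    apply (subst cls_eq[OF c2 c])
    using D_conj[OF urep_in(2)[OF assms(1)] urep_in(2)[OF assms(2)]] by (rule D_mono) auto
qed

lemma zero_U: "\<zero>\<^bsub>U\<^esub> = cls (\<lambda>s\<in>S. \<zero>\<^bsub>L s\<^esub>)" unfolding ultraproduct_def uzero_def by simp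
lemma one_U: "\<one>\<^bsub>U\<^esub> = cls (\<lambda>s\<in>S. \<one>\<^bsub>L s\<^esub>)" unfolding ultraproduct_def uone_def by simp
lemma zero_up: "(\<lambda>s\<in>S. \<zero>\<^bsub>L s\<^esub>) \<in> uprod S L" by (intro restrict_uprod) (auto intro: cring.cring_simprules[OF cr])
lemma one_up: "(\<lambda>s\<in>S. \<one>\<^bsub>L s\<^esub>) \<in> uprod S L" by (intro restrict_uprod) (auto intro: cring.cring_simprules[OF cr])
lemma cls_in: "f \<in> uprod S L \<Longrightarrow> cls f \<in> carrier U" using carrier_U by auto
lemma U_cases: "x \<in> carrier U \<Longrightarrow> (\<And>f. f \<in> uprod S L \<Longrightarrow> x = cls f \<Longrightarrow> P) \<Longrightarrow> P"
  using carrier_U by auto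

lemma add_up: "f \<in> uprod S L \<Longrightarrow> g \<in> uprod S L \<Longrightarrow> (\<lambda>s\<in>S. f s \<oplus>\<^bsub>L s\<^esub> g s) \<in> uprod S L"
  by (intro restrict_uprod) (auto dest: uprodD intro: cring.cring_simprules[OF cr])
lemma mult_up: "f \<in> uprod S L \<Longrightarrow> g \<in> uprod S L \<Longrightarrow> (\<lambda>s\<in>S. f s \<otimes>\<^bsub>L s\<^esub> g s) \<in> uprod S L"
  by (intro restrict_uprod) (auto dest: uprodD intro: cring.cring_simprules[OF cr])
lemma neg_up: "f \<in> uprod S L \<Longrightarrow> (\<lambda>s\<in>S. \<ominus>\<^bsub>L s\<^esub> f s) \<in> uprod S L"
  by (intro restrict_uprod) (auto dest: uprodD intro: cring.cring_simprules[OF cr])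

lemma restrict_eq_up: "f \<in> uprod S L \<Longrightarrow> (\<And>s. s \<in> S \<Longrightarrow> h s = f s) \<Longrightarrow> (\<lambda>s\<in>S. h s) = f"
  unfolding uprod_def by (auto simp: PiE_def extensional_def)

lemma cring_U: "cring U"
proof (rule cringI)
  show "abelian_group U"
  proof (rule abelian_groupI)
    fix x y assume "x \<in> carrier U" "y \<in> carrier U"
    then show "x \<oplus>\<^bsub>U\<^esub> y \<in> carrier U"
      by (elim U_cases) (simp add: add_cls add_up cls_in)
  next
    show "\<zero>\<^bsub>U\<^esub> \<in> carrier U" using zero_U zero_up cls_in by simp
  next
    fix x y z assume "x \<in> carrier U" "y \<in> carrier U" "z \<in> carrier U"
    then show "(x \<oplus>\<^bsub>U\<^esub> y) \<oplus>\<^bsub>U\<^esub> z = x \<oplus>\<^bsub>U\<^esub> (y \<oplus>\<^bsub>U\<^esub> z)"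
      by (elim U_cases) (simp add: add_cls add_up, rule arg_cong[where f=cls],
          auto intro!: restrict_ext cring.cring_simprules(7)[OF cr] dest: uprodD)
  next
    fix x y assume "x \<in> carrier U" "y \<in> carrier U"
    then show "x \<oplus>\<^bsub>U\<^esub> y = y \<oplus>\<^bsub>U\<^esub> x"
      by (elim U_cases) (simp add: add_cls add_up, rule arg_cong[where f=cls],
          auto intro!: restrict_ext cring.cring_simprules(10)[OF cr] dest: uprodD)
  next
    fix x assume "x \<in> carrier U"
    then show "\<zero>\<^bsub>U\<^esub> \<oplus>\<^bsub>U\<^esub> x = x"
      by (elim U_cases) (simp add: zero_U add_cls add_up zero_up, rule arg_cong[where f=cls],
          auto intro!: restrict_eq_up cring.cring_simprules[OF cr] dest: uprodD)
  next
    fix x assume "x \<in> carrier U"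
    then show "\<exists>y\<in>carrier U. y \<oplus>\<^bsub>U\<^esub> x = \<zero>\<^bsub>U\<^esub>"
    proof (elim U_cases)
      fix f assume f: "f \<in> uprod S L" "x = cls f"
      have "cls (\<lambda>s\<in>S. \<ominus>\<^bsub>L s\<^esub> f s) \<oplus>\<^bsub>U\<^esub> x = \<zero>\<^bsub>U\<^esub>"
        unfolding f(2) zero_U using f(1)
        apply (subst add_cls[OF neg_up[OF f(1)] f(1)])
        by (rule arg_cong[where f=cls],
              auto intro!: restrict_ext cring.cring_simprules[OF cr] dest: uprodD)
      thus ?thesis using cls_in[OF neg_up[OF f(1)]] by blast
    qed
  qed
next
  show "comm_monoid U"
  proof (rule comm_monoidI)
    fix x y assume "x \<in> carrier U" "y \<in> carrier U"
    then show "x \<otimes>\<^bsub>U\<^esub> y \<in> carrier U"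
      by (elim U_cases) (simp add: mult_cls mult_up cls_in)
  next
    show "\<one>\<^bsub>U\<^esub> \<in> carrier U" using one_U one_up cls_in by simp
  next
    fix x y z assume "x \<in> carrier U" "y \<in> carrier U" "z \<in> carrier U"
    then show "(x \<otimes>\<^bsub>U\<^esub> y) \<otimes>\<^bsub>U\<^esub> z = x \<otimes>\<^bsub>U\<^esub> (y \<otimes>\<^bsub>U\<^esub> z)"
      by (elim U_cases) (simp add: mult_cls mult_up, rule arg_cong[where f=cls],
          auto intro!: restrict_ext cring.cring_simprules(11)[OF cr] dest: uprodD)
  next
    fix x y assume "x \<in> carrier U" "y \<in> carrier U"
    then show "x \<otimes>\<^bsub>U\<^esub> y = y \<otimes>\<^bsub>U\<^esub> x"
      by (elim U_cases) (simp add: mult_cls mult_up, rule arg_cong[where f=cls],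
          auto intro!: restrict_ext cring.cring_simprules(14)[OF cr] dest: uprodD)
  next
    fix x assume "x \<in> carrier U"
    then show "\<one>\<^bsub>U\<^esub> \<otimes>\<^bsub>U\<^esub> x = x"
      by (elim U_cases) (simp add: one_U mult_cls mult_up one_up, rule arg_cong[where f=cls],
          auto intro!: restrict_eq_up cring.cring_simprules[OF cr] dest: uprodD)
  qed
next
  fix x y z assume "x \<in> carrier U" "y \<in> carrier U" "z \<in> carrier U"
  then show "(x \<oplus>\<^bsub>U\<^esub> y) \<otimes>\<^bsub>U\<^esub> z = x \<otimes>\<^bsub>U\<^esub> z \<oplus>\<^bsub>U\<^esub> y \<otimes>\<^bsub>U\<^esub> z"
    by (elim U_cases) (simp add: mult_cls mult_up add_cls add_up, rule arg_cong[where f=cls],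
        auto intro!: restrict_ext cring.cring_simprules(13)[OF cr] dest: uprodD)
qed


lemma cls_zero_iff: assumes "f \<in> uprod S L" shows "cls f = \<zero>\<^bsub>U\<^esub> \<longleftrightarrow> {s\<in>S. f s = \<zero>\<^bsub>L s\<^esub>} \<in> D"
proof -
  have "cls f = \<zero>\<^bsub>U\<^esub> \<longleftrightarrow> {s\<in>S. f s = (\<lambda>s\<in>S. \<zero>\<^bsub>L s\<^esub>) s} \<in> D"
    unfolding zero_U by (rule cls_eq[OF assms zero_up])
  also have "{s\<in>S. f s = (\<lambda>s\<in>S. \<zero>\<^bsub>L s\<^esub>) s} = {s\<in>S. f s = \<zero>\<^bsub>L s\<^esub>}" by auto
  finally show ?thesis .
qed

lemma cls_nonzero_iff: assumes "f \<in> uprod S L"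
  shows "cls f \<noteq> \<zero>\<^bsub>U\<^esub> \<longleftrightarrow> {s\<in>S. f s \<noteq> \<zero>\<^bsub>L s\<^esub>} \<in> D"
proof
  assume "cls f \<noteq> \<zero>\<^bsub>U\<^esub>"
  hence "{s\<in>S. f s = \<zero>\<^bsub>L s\<^esub>} \<notin> D" using cls_zero_iff[OF assms] by simp
  hence "S - {s\<in>S. f s = \<zero>\<^bsub>L s\<^esub>} \<in> D" using D_compl[of "{s\<in>S. f s = \<zero>\<^bsub>L s\<^esub>}"] by simp
  moreover have "S - {s\<in>S. f s = \<zero>\<^bsub>L s\<^esub>} = {s\<in>S. f s \<noteq> \<zero>\<^bsub>L s\<^esub>}" by auto
  ultimately show "{s\<in>S. f s \<noteq> \<zero>\<^bsub>L s\<^esub>} \<in> D" by simp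
next
  assume a: "{s\<in>S. f s \<noteq> \<zero>\<^bsub>L s\<^esub>} \<in> D"
  show "cls f \<noteq> \<zero>\<^bsub>U\<^esub>"
  proof
    assume "cls f = \<zero>\<^bsub>U\<^esub>"
    hence "{s\<in>S. f s = \<zero>\<^bsub>L s\<^esub>} \<in> D" using cls_zero_iff[OF assms] by simp
    thus False using D_not_false[of "\<lambda>s. f s = \<zero>\<^bsub>L s\<^esub>"] a by simp
  qed
qed

lemma field_U: "field U"
proof (rule cring.cring_fieldI2[OF cring_U])
  show "\<zero>\<^bsub>U\<^esub> \<noteq> \<one>\<^bsub>U\<^esub>"
  proof
    assume "\<zero>\<^bsub>U\<^esub> = \<one>\<^bsub>U\<^esub>"
    hence "{s\<in>S. (\<lambda>s\<in>S. \<one>\<^bsub>L s\<^esub>) s = \<zero>\<^bsub>L s\<^esub>} \<in> D" using cls_zero_iff[OF one_up] one_U by simp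
    moreover have "{s\<in>S. (\<lambda>s\<in>S. \<one>\<^bsub>L s\<^esub>) s = \<zero>\<^bsub>L s\<^esub>} = {}"
      using domain.one_not_zero[OF field.axioms(1)[OF fld]] by force
    ultimately show False using empty_D by metis
  qed
next
  fix a assume a: "a \<in> carrier U" "a \<noteq> \<zero>\<^bsub>U\<^esub>"
  then obtain f where f: "f \<in> uprod S L" "a = cls f" by (elim U_cases)
  have nz: "{s\<in>S. f s \<noteq> \<zero>\<^bsub>L s\<^esub>} \<in> D" using cls_nonzero_iff[OF f(1)] a f by simp
  define g where "g = (\<lambda>s\<in>S. if f s = \<zero>\<^bsub>L s\<^esub> then \<zero>\<^bsub>L s\<^esub> else inv\<^bsub>L s\<^esub> f s)"
  have ginv: "f s \<otimes>\<^bsub>L s\<^esub> g s = \<one>\<^bsub>L s\<^esub>" "g s \<in> carrier (L s)"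
    if "s \<in> S" "f s \<noteq> \<zero>\<^bsub>L s\<^esub>" for s
  proof -
    have "f s \<in> Units (L s)" using field.field_Units[OF fld[OF that(1)]] uprodD[OF f(1) that(1)] that(2) by blast
    thus "f s \<otimes>\<^bsub>L s\<^esub> g s = \<one>\<^bsub>L s\<^esub>" "g s \<in> carrier (L s)"
      unfolding g_def using that monoid.Units_r_inv[OF cring.axioms(1)[OF cr[OF that(1)], THEN ring.axioms(2)]]
        monoid.Units_inv_closed[OF cring.axioms(1)[OF cr[OF that(1)], THEN ring.axioms(2)]] by auto
  qed
  have gu: "g \<in> uprod S L" unfolding uprod_def
  proof
    fix s assume s: "s \<in> S"
    show "g s \<in> carrier (L s)"
    proof (cases "f s = \<zero>\<^bsub>L s\<^esub>")
      case True thus ?thesis unfolding g_def using s cring.cring_simprules(2)[OF cr[OF s]] by simp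
    next
      case False thus ?thesis using ginv(2)[OF s] by simp
    qed
  next
    fix s assume "s \<notin> S" thus "g s = undefined" unfolding g_def by simp
  qed
  have "a \<otimes>\<^bsub>U\<^esub> cls g = \<one>\<^bsub>U\<^esub>"
    unfolding f(2) one_U mult_cls[OF f(1) gu]
    apply (subst cls_eq[OF mult_up[OF f(1) gu] one_up])
    using nz apply (rule D_mono)
    using ginv by simp
  thus "\<exists>b\<in>carrier U. a \<otimes>\<^bsub>U\<^esub> b = \<one>\<^bsub>U\<^esub>" using cls_in[OF gu] by blast
qed

lemma neg_cls: assumes f: "f \<in> uprod S L" shows "\<ominus>\<^bsub>U\<^esub> cls f = cls (\<lambda>s\<in>S. \<ominus>\<^bsub>L s\<^esub> f s)"
proof -
  interpret U: field U by (rule field_U)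
  have "cls (\<lambda>s\<in>S. \<ominus>\<^bsub>L s\<^esub> f s) \<oplus>\<^bsub>U\<^esub> cls f = \<zero>\<^bsub>U\<^esub>"
    unfolding zero_U
    apply (subst add_cls[OF neg_up[OF f] f])
    by (rule arg_cong[where f=cls], use f in \<open>auto intro!: restrict_ext cring.cring_simprules[OF cr] dest: uprodD\<close>)
  thus ?thesis using U.minus_equality cls_in f neg_up by blast
qed

definition ginv :: "('s \<Rightarrow> 'a) \<Rightarrow> ('s \<Rightarrow> 'a)" where
  "ginv f = (\<lambda>s\<in>S. if f s = \<zero>\<^bsub>L s\<^esub> then \<zero>\<^bsub>L s\<^esub> else inv\<^bsub>L s\<^esub> f s)"

lemma ginv_props: assumes f: "f \<in> uprod S L" and s: "s \<in> S" "f s \<noteq> \<zero>\<^bsub>L s\<^esub>"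
  shows "f s \<otimes>\<^bsub>L s\<^esub> ginv f s = \<one>\<^bsub>L s\<^esub>" "ginv f s \<in> carrier (L s)" "ginv f s = inv\<^bsub>L s\<^esub> f s"
proof -
  have "f s \<in> Units (L s)" using field.field_Units[OF fld[OF s(1)]] uprodD[OF f s(1)] s(2) by blast
  thus "f s \<otimes>\<^bsub>L s\<^esub> ginv f s = \<one>\<^bsub>L s\<^esub>" "ginv f s \<in> carrier (L s)" "ginv f s = inv\<^bsub>L s\<^esub> f s"
    unfolding ginv_def using s monoid.Units_r_inv[OF cring.axioms(1)[OF cr[OF s(1)], THEN ring.axioms(2)]]
      monoid.Units_inv_closed[OF cring.axioms(1)[OF cr[OF s(1)], THEN ring.axioms(2)]] by auto
qed

lemma ginv_up: assumes f: "f \<in> uprod S L" shows "ginv f \<in> uprod S L"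
  unfolding uprod_def
proof
  fix s assume s: "s \<in> S"
  show "ginv f s \<in> carrier (L s)"
  proof (cases "f s = \<zero>\<^bsub>L s\<^esub>")
    case True thus ?thesis unfolding ginv_def using s cring.cring_simprules(2)[OF cr[OF s]] by simp
  next
    case False thus ?thesis using ginv_props(2)[OF f s] by simp
  qed
next
  fix s assume "s \<notin> S" thus "ginv f s = undefined" unfolding ginv_def by simp
qed

lemma inv_cls: assumes f: "f \<in> uprod S L" "cls f \<noteq> \<zero>\<^bsub>U\<^esub>"
  shows "inv\<^bsub>U\<^esub> cls f = cls (ginv f)"
proof -
  interpret U: field U by (rule field_U)
  have nz: "{s\<in>S. f s \<noteq> \<zero>\<^bsub>L s\<^esub>} \<in> D" using cls_nonzero_iff[OF f(1)] f(2) by simp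
  have "cls f \<otimes>\<^bsub>U\<^esub> cls (ginv f) = \<one>\<^bsub>U\<^esub>"
    unfolding one_U mult_cls[OF f(1) ginv_up[OF f(1)]]
    apply (subst cls_eq[OF mult_up[OF f(1) ginv_up[OF f(1)]] one_up])
    using nz apply (rule D_mono)
    using ginv_props(1)[OF f(1)] by simp
  thus ?thesis using U.comm_inv_char cls_in f(1) ginv_up by blast
qed

lemma pow_cls: assumes f: "f \<in> uprod S L"
  shows "cls f [^]\<^bsub>U\<^esub> (n::nat) = cls (\<lambda>s\<in>S. f s [^]\<^bsub>L s\<^esub> n)"
proof (induct n)
  case 0 show ?case using one_U by (simp add: restrict_def)
next
  case (Suc n)
  have pu: "(\<lambda>s\<in>S. f s [^]\<^bsub>L s\<^esub> n) \<in> uprod S L"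
    using f by (intro restrict_uprod) (auto dest: uprodD intro: monoid.nat_pow_closed[OF cring.axioms(1)[OF cr, THEN ring.axioms(2)]])
  have "cls f [^]\<^bsub>U\<^esub> Suc n = cls f [^]\<^bsub>U\<^esub> n \<otimes>\<^bsub>U\<^esub> cls f" by (rule nat_pow_Suc)
  also have "\<dots> = cls (\<lambda>s\<in>S. (\<lambda>s\<in>S. f s [^]\<^bsub>L s\<^esub> n) s \<otimes>\<^bsub>L s\<^esub> f s)"
    unfolding Suc by (rule mult_cls[OF pu f])
  also have "\<dots> = cls (\<lambda>s\<in>S. f s [^]\<^bsub>L s\<^esub> Suc n)"
    by (rule arg_cong[where f=cls], rule restrict_ext, simp)
  finally show ?case .
qed

lemma eval_cls: assumes fs: "set fs \<subseteq> uprod S L" and x: "x \<in> uprod S L"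
  shows "ring.eval U (map cls fs) (cls x) = cls (\<lambda>s\<in>S. ring.eval (L s) (map (\<lambda>f. f s) fs) (x s))"
  using fs
proof (induct fs)
  case Nil
  interpret U: field U by (rule field_U)
  have "ring.eval (L s) [] (x s) = \<zero>\<^bsub>L s\<^esub>" if "s \<in> S" for s
    using ring.eval.simps(1)[OF cring.axioms(1)[OF cr[OF that]]] by simp
  hence "(\<lambda>s\<in>S. ring.eval (L s) [] (x s)) = (\<lambda>s\<in>S. \<zero>\<^bsub>L s\<^esub>)" by (intro restrict_ext) auto
  hence e: "(\<lambda>s\<in>S. ring.eval (L s) (map (\<lambda>f. f s) []) (x s)) = (\<lambda>s\<in>S. \<zero>\<^bsub>L s\<^esub>)" by simp
  have "U.eval (map cls []) (cls x) = \<zero>\<^bsub>U\<^esub>" by simp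
  thus ?case unfolding zero_U e .
next
  case (Cons f fs)
  interpret U: field U by (rule field_U)
  have f: "f \<in> uprod S L" and fsu: "set fs \<subseteq> uprod S L" using Cons by auto
  have evc: "ring.eval (L s) (map (\<lambda>f. f s) fs) (x s) \<in> carrier (L s)" if "s \<in> S" for s
    apply (rule ring.eval_in_carrier[OF cring.axioms(1)[OF cr[OF that]]])
    using fsu x that by (auto dest: uprodD)
  have eu: "(\<lambda>s\<in>S. ring.eval (L s) (map (\<lambda>f. f s) fs) (x s)) \<in> uprod S L"
    using evc by (intro restrict_uprod) auto
  have pu: "(\<lambda>s\<in>S. x s [^]\<^bsub>L s\<^esub> length fs) \<in> uprod S L"
    using x by (intro restrict_uprod) (auto dest: uprodD intro: monoid.nat_pow_closed[OF cring.axioms(1)[OF cr, THEN ring.axioms(2)]])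
  have mu: "(\<lambda>s\<in>S. f s \<otimes>\<^bsub>L s\<^esub> (\<lambda>s\<in>S. x s [^]\<^bsub>L s\<^esub> length fs) s) \<in> uprod S L"
    using mult_up[OF f pu] .
  have "U.eval (map cls (f # fs)) (cls x) = cls f \<otimes>\<^bsub>U\<^esub> cls x [^]\<^bsub>U\<^esub> length fs \<oplus>\<^bsub>U\<^esub> U.eval (map cls fs) (cls x)"
    by simp
  also have "\<dots> = cls (\<lambda>s\<in>S. (\<lambda>s\<in>S. f s \<otimes>\<^bsub>L s\<^esub> (\<lambda>s\<in>S. x s [^]\<^bsub>L s\<^esub> length fs) s) s \<oplus>\<^bsub>L s\<^esub> (\<lambda>s\<in>S. ring.eval (L s) (map (\<lambda>f. f s) fs) (x s)) s)"
    unfolding Cons(1)[OF fsu] pow_cls[OF x] mult_cls[OF f pu] add_cls[OF mu eu] ..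
  also have "\<dots> = cls (\<lambda>s\<in>S. ring.eval (L s) (map (\<lambda>f. f s) (f # fs)) (x s))"
    by (rule arg_cong[where f=cls], rule restrict_ext, simp add: ring.eval.simps(2)[OF cring.axioms(1)[OF cr]])
  finally show ?case .
qed

lemma PiE_up: "(\<And>s. s \<in> S \<Longrightarrow> A s \<subseteq> carrier (L s)) \<Longrightarrow> f \<in> (\<Pi>\<^sub>E s\<in>S. A s) \<Longrightarrow> f \<in> uprod S L"
  unfolding uprod_def by (auto simp: PiE_def Pi_def)

lemma usub_subfield: assumes A: "\<And>s. s \<in> S \<Longrightarrow> subfield (A s) (L s)"
  shows "subfield (usub D S L A) U"
proof -
  interpret U: field U by (rule field_U)
  have sr: "subring (A s) (L s)" if "s \<in> S" for s using subfieldE(1)[OF A[OF that]] .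
  have Ac: "A s \<subseteq> carrier (L s)" if "s \<in> S" for s using subringE(1)[OF sr[OF that]] .
  have up: "f \<in> uprod S L" if "f \<in> (\<Pi>\<^sub>E s\<in>S. A s)" for f using PiE_up[OF Ac that] by blast
  have mem: "cls (\<lambda>s\<in>S. h s) \<in> usub D S L A" if "\<And>s. s \<in> S \<Longrightarrow> h s \<in> A s" for h
    unfolding usub_def using that by (intro imageI) auto
  show ?thesis
  proof (rule U.subfieldI'[OF U.subringI])
    show "usub D S L A \<subseteq> carrier U" unfolding usub_def using up cls_in by auto
    show "\<one>\<^bsub>U\<^esub> \<in> usub D S L A" unfolding one_U using subringE(3)[OF sr] by (intro mem) auto
  next
    fix h assume "h \<in> usub D S L A"
    then obtain f where f: "f \<in> (\<Pi>\<^sub>E s\<in>S. A s)" "h = cls f" unfolding usub_def by auto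
    show "\<ominus>\<^bsub>U\<^esub> h \<in> usub D S L A" unfolding f(2) neg_cls[OF up[OF f(1)]]
      using f(1) subringE(5)[OF sr] by (intro mem) auto
  next
    fix h1 h2 assume "h1 \<in> usub D S L A" "h2 \<in> usub D S L A"
    then obtain f1 f2 where f: "f1 \<in> (\<Pi>\<^sub>E s\<in>S. A s)" "h1 = cls f1" "f2 \<in> (\<Pi>\<^sub>E s\<in>S. A s)" "h2 = cls f2"
      unfolding usub_def by auto
    show "h1 \<otimes>\<^bsub>U\<^esub> h2 \<in> usub D S L A" unfolding f(2,4) mult_cls[OF up[OF f(1)] up[OF f(3)]]
      using f(1,3) subringE(6)[OF sr] by (intro mem) (blast dest: PiE_mem)
    show "h1 \<oplus>\<^bsub>U\<^esub> h2 \<in> usub D S L A" unfolding f(2,4) add_cls[OF up[OF f(1)] up[OF f(3)]]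
      using f(1,3) subringE(7)[OF sr] by (intro mem) (blast dest: PiE_mem)
  next
    fix k assume k: "k \<in> usub D S L A - {\<zero>\<^bsub>U\<^esub>}"
    then obtain f where f: "f \<in> (\<Pi>\<^sub>E s\<in>S. A s)" "k = cls f" unfolding usub_def by auto
    have "ginv f s \<in> A s" if s: "s \<in> S" for s
    proof (cases "f s = \<zero>\<^bsub>L s\<^esub>")
      case True thus ?thesis unfolding ginv_def using s subringE(2)[OF sr[OF s]] by simp
    next
      case False
      have "inv\<^bsub>L s\<^esub> f s \<in> A s"
        using ring.subfield_m_inv(1)[OF cring.axioms(1)[OF cr[OF s]] A[OF s]] f(1) s False by auto
      thus ?thesis using ginv_props(3)[OF up[OF f(1)] s False] by simp
    qed
    moreover have "ginv f = (\<lambda>s\<in>S. ginv f s)" unfolding ginv_def by auto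
    ultimately have "cls (ginv f) \<in> usub D S L A" using mem[of "ginv f"] by metis
    thus "inv\<^bsub>U\<^esub> k \<in> usub D S L A" using inv_cls[OF up[OF f(1)]] k f(2) by auto
  qed
qed

end


theorem mainTheorem6:
  fixes S :: "'s set" and D :: "'s set set"
    and L :: "'s \<Rightarrow> 'a ring"   \<comment> \<open>L s = the algebraic closure of F_s(t)\<close>
    and F :: "'s \<Rightarrow> 'a set"     \<comment> \<open>F s = the field F_s inside L s\<close>
    and t :: "'s \<Rightarrow> 'a"         \<comment> \<open>t s = the variable t of F_s(t)\<close>
  assumes "infinite S"
    and "ultrafilter_on S D" and "nonprincipal_on S D"
    and "\<And>s. s \<in> S \<Longrightarrow> subfield (F s) (L s)"
    and "\<And>s. s \<in> S \<Longrightarrow> t s \<in> carrier (L s)"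
    and "\<And>s. s \<in> S \<Longrightarrow> ring.transcendental (L s) (F s) (t s)"
    and "\<And>s. s \<in> S \<Longrightarrow> algebraic_closure (L s) (generate_field (L s) (insert (t s) (F s)))"
  shows
    "usub D S L (\<lambda>s. alg_in (L s) (F s))
       \<inter> alg_in (ultraproduct D S L)
           (generate_field (ultraproduct D S L)
              (insert (ulim D S L (restrict t S)) (usub D S L F)))
     = usub D S L (\<lambda>s. alg_in (L s) (F s))
       \<inter> alg_in (ultraproduct D S L) (usub D S L F)"
proof -
  have fldL: "field (L s)" if "s \<in> S" for s using assms(7)[OF that] algebraic_closure.axioms(1) by blast
  interpret UltP S D L by (rule UltP.intro[OF assms(2) fldL])
  interpret U: field "ultraproduct D S L" by (rule field_U)
  define M where "M s = generate_field (L s) (insert (t s) (F s))" for s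
  have Fc: "F s \<subseteq> carrier (L s)" if "s \<in> S" for s using subfieldE(3)[OF assms(4)[OF that]] .
  have Msf: "subfield (M s) (L s)" if "s \<in> S" for s
    unfolding M_def using field.generate_field_is_subfield[OF fldL[OF that]] Fc[OF that] assms(5)[OF that] by auto
  have FM: "F s \<subseteq> M s" for s unfolding M_def by (auto intro: generate_field.incl)
  have tM: "t s \<in> M s" for s unfolding M_def by (auto intro: generate_field.incl)
  define T where "T = cls (restrict t S)"
  define Fs where "Fs = usub D S L F"
  define Ms where "Ms = usub D S L M"
  have Fsf: "subfield Fs U" unfolding Fs_def using usub_subfield assms(4) by blast
  have Msf': "subfield Ms U" unfolding Ms_def using usub_subfield Msf by blast
  have TM: "T \<in> Ms" unfolding T_def Ms_def usub_def using tM by (intro imageI) auto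
  have FsMs: "Fs \<subseteq> Ms" unfolding Fs_def Ms_def usub_def using FM by (intro image_mono PiE_mono) auto
  have Hc: "insert T Fs \<subseteq> carrier U" using TM subfieldE(3)[OF Msf'] FsMs by auto
  have GM: "generate_field U (insert T Fs) \<subseteq> Ms"
    using U.generate_field_min_subfield1[OF Hc Msf'] TM FsMs by auto
  have FsG: "Fs \<subseteq> generate_field U (insert T Fs)" by (auto intro: generate_field.incl)
  have main: "U.algebraic Fs y" if yA: "y \<in> usub D S L (\<lambda>s. alg_in (L s) (F s))" and yc: "y \<in> carrier U"
     and yalg: "U.algebraic (generate_field U (insert T Fs)) y" for y
  proof -
    have "U.algebraic Ms y" using U.algebraic_mono[unfolded over_def, OF GM yalg] .
    then obtain p where p: "p \<in> carrier (Ms[X]\<^bsub>U\<^esub>)" "p \<noteq> []" "U.eval p y = \<zero>\<^bsub>U\<^esub>"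
      using U.algebraicE[unfolded over_def, OF subfieldE(1)[OF Msf'] yc] by blast
    obtain xf where xf: "xf \<in> (\<Pi>\<^sub>E s\<in>S. alg_in (L s) (F s))" "y = cls xf"
      using yA unfolding usub_def by auto
    have xfu: "xf \<in> uprod S L" using PiE_up[OF _ xf(1)] unfolding alg_in_def by blast
    have xfa: "xf s \<in> carrier (L s)" "ring.algebraic (L s) (F s) (xf s)" if "s \<in> S" for s
      using xf(1) that unfolding alg_in_def by (auto dest: PiE_mem)
    define rep where "rep c = (SOME f. f \<in> (\<Pi>\<^sub>E s\<in>S. M s) \<and> c = cls f)" for c
    have pMs: "set p \<subseteq> Ms" using p(1) unfolding univ_poly_carrier[symmetric] polynomial_def by auto
    have rep: "rep c \<in> (\<Pi>\<^sub>E s\<in>S. M s) \<and> c = cls (rep c)" if "c \<in> set p" for c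
    proof -
      have "\<exists>f. f \<in> (\<Pi>\<^sub>E s\<in>S. M s) \<and> c = cls f" using pMs that unfolding Ms_def usub_def by auto
      thus ?thesis unfolding rep_def by (rule someI_ex)
    qed
    define fs where "fs = map rep p"
    have pfs: "p = map cls fs" unfolding fs_def using rep by (induct p) auto
    have Mc: "M s \<subseteq> carrier (L s)" if "s \<in> S" for s using subfieldE(3)[OF Msf[OF that]] .
    have fsu: "set fs \<subseteq> uprod S L" unfolding fs_def using rep PiE_up[OF Mc] by auto
    define n where "n = length p"
    define ps where "ps s = map (\<lambda>f. f s) fs" for s
    have A1: "{s\<in>S. ring.eval (L s) (ps s) (xf s) = \<zero>\<^bsub>L s\<^esub>} \<in> D"
    proof -
      have "cls (\<lambda>s\<in>S. ring.eval (L s) (ps s) (xf s)) = \<zero>\<^bsub>U\<^esub>"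
        using p(3) eval_cls[OF fsu xfu] unfolding pfs xf(2) ps_def by simp
      moreover have "(\<lambda>s\<in>S. ring.eval (L s) (ps s) (xf s)) \<in> uprod S L"
        using fsu xfu by (intro restrict_uprod ring.eval_in_carrier[OF cring.axioms(1)[OF cr]])
          (auto simp: ps_def dest: uprodD)
      ultimately have "{s\<in>S. (\<lambda>s\<in>S. ring.eval (L s) (ps s) (xf s)) s = \<zero>\<^bsub>L s\<^esub>} \<in> D"
        using cls_zero_iff by blast
      thus ?thesis by (rule D_mono) simp
    qed
    have fsne: "fs \<noteq> []" using p(2) unfolding fs_def by simp
    have hdu: "hd fs \<in> uprod S L" using fsu fsne by auto
    have "hd p \<noteq> \<zero>\<^bsub>U\<^esub>" using p(1,2) unfolding univ_poly_carrier[symmetric] polynomial_def by auto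
    hence "cls (hd fs) \<noteq> \<zero>\<^bsub>U\<^esub>" unfolding pfs using fsne by (simp add: hd_map)
    hence A2: "{s\<in>S. hd fs s \<noteq> \<zero>\<^bsub>L s\<^esub>} \<in> D" using cls_nonzero_iff[OF hdu] by simp
    define P where "P s r \<longleftrightarrow> set r \<subseteq> F s \<and> r \<noteq> [] \<and> hd r \<noteq> \<zero>\<^bsub>L s\<^esub> \<and> length r = n \<and> ring.eval (L s) r (xf s) = \<zero>\<^bsub>L s\<^esub>" for s r
    have exP: "\<exists>r. P s r" if "s \<in> S" "ring.eval (L s) (ps s) (xf s) = \<zero>\<^bsub>L s\<^esub>" "hd fs s \<noteq> \<zero>\<^bsub>L s\<^esub>" for s
    proof -
      have "set (ps s) \<subseteq> M s" unfolding ps_def fs_def using rep that(1) by (auto dest: PiE_mem)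
      moreover have "ps s \<noteq> []" "hd (ps s) \<noteq> \<zero>\<^bsub>L s\<^esub>" unfolding ps_def using fsne that(3) by (auto simp: hd_map)
      ultimately show ?thesis
        using field.comp_main[OF fldL[OF that(1)] assms(4)[OF that(1)] assms(5)[OF that(1)] assms(6)[OF that(1)]
            xfa[OF that(1)] _ _ _ that(2)] unfolding P_def M_def ps_def n_def pfs by auto
    qed
    define r where "r s = (if \<exists>r. P s r then SOME r. P s r else replicate n \<zero>\<^bsub>L s\<^esub>)" for s
    have rP: "P s (r s)" if "\<exists>r. P s r" for s unfolding r_def using that someI_ex[OF that] by simp
    have rF: "set (r s) \<subseteq> F s" "length (r s) = n" if "s \<in> S" for s
    proof -
      have "\<zero>\<^bsub>L s\<^esub> \<in> F s" using subringE(2)[OF subfieldE(1)[OF assms(4)[OF that]]] .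
      thus "set (r s) \<subseteq> F s" "length (r s) = n" using rP[of s] unfolding r_def P_def by (auto split: if_splits)
    qed
    define gs where "gs = map (\<lambda>i. \<lambda>s\<in>S. r s ! i) [0..<n]"
    have gsF: "set gs \<subseteq> (\<Pi>\<^sub>E s\<in>S. F s)" unfolding gs_def using rF by (auto, metis nth_mem subsetD)
    have gsu: "set gs \<subseteq> uprod S L" using gsF PiE_up[OF Fc] by auto
    define R where "R = map cls gs"
    have RFs: "set R \<subseteq> Fs" unfolding R_def Fs_def usub_def using gsF by auto
    have mapr: "map (\<lambda>g. g s) gs = r s" if "s \<in> S" for s
    proof -
      have "map (\<lambda>g. g s) gs = map (\<lambda>i. r s ! i) [0..<n]" unfolding gs_def using that by (simp add: o_def)
      thus ?thesis using rF(2)[OF that] map_nth by metis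
    qed
    have A12: "{s\<in>S. P s (r s)} \<in> D"
      using D_conj[OF A1 A2] by (rule D_mono) (use exP rP in blast)
    have n0: "n > 0" unfolding n_def using p(2) by simp
    have "U.eval R y = cls (\<lambda>s\<in>S. ring.eval (L s) (map (\<lambda>f. f s) gs) (xf s))"
      unfolding R_def xf(2) by (rule eval_cls[OF gsu xfu])
    also have "\<dots> = cls (\<lambda>s\<in>S. ring.eval (L s) (r s) (xf s))"
      using mapr by (intro arg_cong[where f=cls] restrict_ext) simp
    also have "\<dots> = \<zero>\<^bsub>U\<^esub>"
    proof -
      have "(\<lambda>s\<in>S. ring.eval (L s) (r s) (xf s)) \<in> uprod S L"
        using rF Fc xfa(1) by (intro restrict_uprod ring.eval_in_carrier[OF cring.axioms(1)[OF cr]])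
          (blast, blast)
      moreover have "{s\<in>S. (\<lambda>s\<in>S. ring.eval (L s) (r s) (xf s)) s = \<zero>\<^bsub>L s\<^esub>} \<in> D"
        using A12 by (rule D_mono) (simp add: P_def)
      ultimately show ?thesis using cls_zero_iff by simp
    qed
    finally have Rev: "U.eval R y = \<zero>\<^bsub>U\<^esub>" .
    have gsne: "gs \<noteq> []" unfolding gs_def using n0 by simp
    have hdg: "hd gs = (\<lambda>s\<in>S. r s ! 0)" unfolding gs_def using n0 by (simp add: hd_map upt_conv_Cons)
    have "hd R \<noteq> \<zero>\<^bsub>U\<^esub>"
    proof -
      have "hd R = cls (hd gs)" unfolding R_def using gsne by (simp add: hd_map)
      moreover have "{s\<in>S. hd gs s \<noteq> \<zero>\<^bsub>L s\<^esub>} \<in> D"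
        using A12 by (rule D_mono) (auto simp: P_def hdg hd_conv_nth)
      moreover have "hd gs \<in> uprod S L" using gsu gsne hd_in_set by blast
      ultimately show ?thesis using cls_nonzero_iff[of "hd gs"] by auto
    qed
    moreover have "R \<noteq> []" unfolding R_def using gsne by simp
    ultimately have "R \<in> carrier (Fs[X]\<^bsub>U\<^esub>)"
      using RFs unfolding univ_poly_carrier[symmetric] polynomial_def by auto
    thus ?thesis using U.algebraicI[unfolded over_def] \<open>R \<noteq> []\<close> Rev by blast
  qed
  show ?thesis
    unfolding T_def[symmetric] Fs_def[symmetric] alg_in_def[where L="ultraproduct D S L"]
    using main U.algebraic_mono[unfolded over_def, OF FsG] by blast
qed

end
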